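(* There exist $n,k\in\mathbb{N}$ with $k\le n$ such that for every 2-coloring of the edges of $B_{n,k}$, there exists an induced monochromatic copy of $B_{4,2}$ in $B_{n,k}$; that is, there is a set $V'$ of vertices of $B_{n,k}$ such that the induced subgraph of $B_{n,k}$ on $V'$ is isomorphic to $B_{4,2}$ and all of its edges receive the same color.
   Context: For $n\in\mathbb{N}$, $[n]=\{1,\dots,n\}$, and for a set $X$, $\binom{X}{k}$ denotes the set of $k$-element subsets of $X$. For $k\le n$, $B_{n,k}$ is the bipartite graph with left vertex set $[n]$, right vertex set $\binom{[n]}{k}$, and edge set $\{(x,X)\in[n]\times\binom{[n]}{k} : x\in X\}$. For a graph $H=(V,E)$ and $V'\subseteq V$, the induced subgraph on $V'$ has vertex set $V'$ and edge set consisting of all edges of $H$ with both endpoints in $V'$. A 2-coloring of the edges is a map from the edge set to a 2-element set of colors. *)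

theory Defs
  imports Main
begin

type_synonym bvert = "nat + nat set"

definition B_verts :: "nat \<Rightarrow> nat \<Rightarrow> bvert set" where
  "B_verts n k = Inl ` {1..n} \<union> Inr ` {X. X \<subseteq> {1..n} \<and> card X = k}"

definition B_edges :: "nat \<Rightarrow> nat \<Rightarrow> bvert set set" where
  "B_edges n k = {{Inl x, Inr X} | x X. x \<in> {1..n} \<and> X \<subseteq> {1..n} \<and> card X = k \<and> x \<in> X}"

definition induced_edges :: "'a set set \<Rightarrow> 'a set \<Rightarrow> 'a set set" where
  "induced_edges E V' = {e \<in> E. e \<subseteq> V'}"

definition graph_iso :: "'a set \<Rightarrow> 'a set set \<Rightarrow> 'b set \<Rightarrow> 'b set set \<Rightarrow> bool" where
  "graph_iso V1 E1 V2 E2 \<longleftrightarrow>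
     (\<exists>f. bij_betw f V1 V2 \<and> (\<forall>u\<in>V1. \<forall>v\<in>V1. {u, v} \<in> E1 \<longleftrightarrow> {f u, f v} \<in> E2))"

end

theory Submission
  imports Defs "HOL-Library.Ramsey"
begin

lemma graph_iso_sym:
  assumes "graph_iso V2 E2 V1 E1" shows "graph_iso V1 E1 V2 E2"
proof -
  obtain f where b: "bij_betw f V2 V1" and e: "\<forall>u\<in>V2. \<forall>v\<in>V2. {u, v} \<in> E2 \<longleftrightarrow> {f u, f v} \<in> E1"
    using assms unfolding graph_iso_def by blast
  let ?g = "inv_into V2 f"
  have bg: "bij_betw ?g V1 V2" using b by (rule bij_betw_inv_into)
  have "\<forall>u\<in>V1. \<forall>v\<in>V1. {u, v} \<in> E1 \<longleftrightarrow> {?g u, ?g v} \<in> E2"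
  proof (intro ballI)
    fix u v assume u: "u \<in> V1" and v: "v \<in> V1"
    have gu: "?g u \<in> V2" "f (?g u) = u" using bg b u bij_betw_apply bij_betw_inv_into_right by fastforce+
    have gv: "?g v \<in> V2" "f (?g v) = v" using bg b v bij_betw_apply bij_betw_inv_into_right by fastforce+
    show "{u, v} \<in> E1 \<longleftrightarrow> {?g u, ?g v} \<in> E2" using e gu gv by metis
  qed
  then show ?thesis unfolding graph_iso_def using bg by blast
qed

lemma B_edge_iff:
  "{u, v} \<in> B_edges n k \<longleftrightarrow>
    (case (u, v) of (Inl x, Inr X) \<Rightarrow> x \<in> {1..n} \<and> X \<subseteq> {1..n} \<and> card X = k \<and> x \<in> X
     | (Inr X, Inl x) \<Rightarrow> x \<in> {1..n} \<and> X \<subseteq> {1..n} \<and> card X = k \<and> x \<in> X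
     | _ \<Rightarrow> False)"
  unfolding B_edges_def
  by (cases u; cases v) (auto simp: doubleton_eq_iff)

lemma sorted3: "(x::nat) < y \<Longrightarrow> y < z \<Longrightarrow> sorted_list_of_set {x,y,z} = [x,y,z]"
  by simp


lemma pair_MinMax:
  assumes "P \<subseteq> {1..4::nat}" "card P = 2"
  shows "Min P < Max P" "Min P \<in> {1..4}" "Max P \<in> {1..4}" "P = {Min P, Max P}"
proof -
  obtain i j where P: "P = {i,j}" "i \<noteq> j" using assms(2) card_2_iff by metis
  show "Min P < Max P" "Min P \<in> {1..4}" "Max P \<in> {1..4}" "P = {Min P, Max P}"
    using P assms(1) by (auto simp: min_def max_def)
qed

lemma key:
  fixes a :: "nat \<Rightarrow> nat" and X :: "nat \<Rightarrow> nat \<Rightarrow> nat set" and c :: "bvert set \<Rightarrow> bool"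
  assumes inj: "inj_on a {1..4}" and arng: "\<And>i. i \<in> {1..4} \<Longrightarrow> a i \<in> {1..n}"
  and Xs: "\<And>i j. 1 \<le> i \<Longrightarrow> i < j \<Longrightarrow> j \<le> 4 \<Longrightarrow>
     X i j \<subseteq> {1..n} \<and> card (X i j) = k \<and> X i j \<inter> a ` {1..4} = {a i, a j}
     \<and> c {Inl (a i), Inr (X i j)} = col \<and> c {Inl (a j), Inr (X i j)} = col"
  shows "\<exists>V' \<subseteq> B_verts n k.
         graph_iso V' (induced_edges (B_edges n k) V') (B_verts 4 2) (B_edges 4 2) \<and>
         (\<exists>col. \<forall>e \<in> induced_edges (B_edges n k) V'. c e = col)"
proof -
  define X' where "X' P = X (Min P) (Max P)" for P
  have X'P: "X' P \<subseteq> {1..n} \<and> card (X' P) = k \<and> X' P \<inter> a ` {1..4} = a ` P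
     \<and> (\<forall>i\<in>P. c {Inl (a i), Inr (X' P)} = col)" if "P \<subseteq> {1..4}" "card P = 2" for P
  proof -
    note m = pair_MinMax[OF that]
    have "1 \<le> Min P" "Max P \<le> 4" using m by auto
    note xs = Xs[OF this(1) m(1) this(2)]
    have "a ` P = {a (Min P), a (Max P)}" using m(4) by (metis image_empty image_insert)
    then show ?thesis using xs m(4) unfolding X'_def by (metis insert_iff singletonD)
  qed
  define g :: "nat + nat set \<Rightarrow> bvert" where "g = case_sum (\<lambda>i. Inl (a i)) (\<lambda>P. Inr (X' P))"
  define V' where "V' = g ` B_verts 4 2"
  have BV: "u \<in> B_verts 4 2 \<longleftrightarrow> (\<exists>i. u = Inl i \<and> i \<in> {1..4}) \<or> (\<exists>P. u = Inr P \<and> P \<subseteq> {1..4} \<and> card P = 2)" for u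
    unfolding B_verts_def by auto
  have injg: "inj_on g (B_verts 4 2)"
  proof (rule inj_onI)
    fix u v assume u: "u \<in> B_verts 4 2" and v: "v \<in> B_verts 4 2" and e: "g u = g v"
    show "u = v"
    proof (cases u)
      case (Inl i)
      then obtain j where "v = Inl j" using e by (cases v) (auto simp: g_def)
      then show ?thesis using Inl u v e inj unfolding BV g_def by (auto dest: inj_onD)
    next
      case (Inr P)
      then obtain Q where Q: "v = Inr Q" using e by (cases v) (auto simp: g_def)
      have P: "P \<subseteq> {1..4}" "card P = 2" using u Inr BV by auto
      have Q2: "Q \<subseteq> {1..4}" "card Q = 2" using v Q BV by auto
      have "X' P = X' Q" using e Inr Q by (simp add: g_def)
      then have "a ` P = a ` Q" using X'P[OF P] X'P[OF Q2] by metis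
      then have "P = Q" using inj P Q2 by (simp add: inj_on_image_eq_iff)
      then show ?thesis using Inr Q by simp
    qed
  qed
  have bij: "bij_betw g (B_verts 4 2) V'" using injg unfolding V'_def bij_betw_def by simp
  have sub: "V' \<subseteq> B_verts n k"
  proof
    fix w assume "w \<in> V'"
    then obtain u where u: "u \<in> B_verts 4 2" "w = g u" unfolding V'_def by auto
    then show "w \<in> B_verts n k"
      using arng X'P unfolding BV B_verts_def g_def by auto
  qed
  have edges: "\<forall>u\<in>B_verts 4 2. \<forall>v\<in>B_verts 4 2. {u, v} \<in> B_edges 4 2 \<longleftrightarrow> {g u, g v} \<in> induced_edges (B_edges n k) V'"
  proof (intro ballI)
    fix u v assume u: "u \<in> B_verts 4 2" and v: "v \<in> B_verts 4 2"
    have "{g u, g v} \<subseteq> V'" using u v unfolding V'_def by auto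
    then have "{g u, g v} \<in> induced_edges (B_edges n k) V' \<longleftrightarrow> {g u, g v} \<in> B_edges n k"
      unfolding induced_edges_def by auto
    moreover have "{u, v} \<in> B_edges 4 2 \<longleftrightarrow> {g u, g v} \<in> B_edges n k"
    proof -
      have lem: "i \<in> P \<longleftrightarrow> a i \<in> X' P" if "i \<in> {1..4}" "P \<subseteq> {1..4}" "card P = 2" for i P
      proof -
        have "a i \<in> X' P \<longleftrightarrow> a i \<in> a ` P" using X'P[OF that(2,3)] that(1) by blast
        also have "\<dots> \<longleftrightarrow> i \<in> P" using inj that by (meson inj_on_image_mem_iff)
        finally show ?thesis by simp
      qed
      show ?thesis
        using u v arng X'P lem unfolding BV
        by (auto simp: B_edge_iff g_def)
    qed
    ultimately show "{u, v} \<in> B_edges 4 2 \<longleftrightarrow> {g u, g v} \<in> induced_edges (B_edges n k) V'" by simp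
  qed
  have iso: "graph_iso V' (induced_edges (B_edges n k) V') (B_verts 4 2) (B_edges 4 2)"
    by (rule graph_iso_sym) (unfold graph_iso_def, use bij edges in blast)
  have mono: "\<forall>e \<in> induced_edges (B_edges n k) V'. c e = col"
  proof
    fix e assume e: "e \<in> induced_edges (B_edges n k) V'"
    then obtain x Y where eq: "e = {Inl x, Inr Y}" and xY: "x \<in> Y" and sV: "e \<subseteq> V'"
      unfolding induced_edges_def B_edges_def by auto
    from sV eq obtain u where u: "u \<in> B_verts 4 2" "Inl x = g u" unfolding V'_def by auto
    then obtain i where i: "i \<in> {1..4}" "x = a i" unfolding BV g_def by auto
    from sV eq obtain w where w: "w \<in> B_verts 4 2" "Inr Y = g w" unfolding V'_def by auto
    then obtain P where P: "P \<subseteq> {1..4}" "card P = 2" "Y = X' P" unfolding BV g_def by auto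
    have "a i \<in> a ` P" using X'P[OF P(1,2)] xY i P(3) by blast
    then have "i \<in> P" using inj i P by (meson inj_on_image_mem_iff)
    then show "c e = col" using X'P[OF P(1,2)] eq i P(3) by auto
  qed
  show ?thesis using sub iso mono by blast
qed


theorem mainTheorem3:
  shows "\<exists>n k. k \<le> n \<and>
    (\<forall>c :: bvert set \<Rightarrow> bool.
       \<exists>V' \<subseteq> B_verts n k.
         graph_iso V' (induced_edges (B_edges n k) V') (B_verts 4 2) (B_edges 4 2) \<and>
         (\<exists>col. \<forall>e \<in> induced_edges (B_edges n k) V'. c e = col))"
proof -
  obtain N :: nat where N: "partn_lst {..<N} (replicate 8 9) 3" using ramsey_full by blast
  have "\<exists>V' \<subseteq> B_verts N 3.
         graph_iso V' (induced_edges (B_edges N 3) V') (B_verts 4 2) (B_edges 4 2) \<and>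
         (\<exists>col. \<forall>e \<in> induced_edges (B_edges N 3) V'. c e = col)" for c :: "bvert set \<Rightarrow> bool"
  proof -
    define pat where "pat Y j = c {Inl (Suc (sorted_list_of_set Y ! j)), Inr (Suc ` Y)}" for Y j
    define f :: "nat set \<Rightarrow> nat" where
      "f Y = (if pat Y 0 then 1 else 0) + (if pat Y 1 then 2 else 0) + (if pat Y 2 then 4 else 0)" for Y
    have "f \<in> nsets {..<N} 3 \<rightarrow> {..<8}" unfolding f_def by auto
    then obtain i H where i: "i < 8" and H: "H \<in> nsets {..<N} 9" and fH: "f ` (nsets H 3) \<subseteq> {i}"
      using partn_lstE[OF N, of f 8] by auto
    define p0 where "p0 = odd i"
    define p1 where "p1 = odd (i div 2)"
    define p2 where "p2 = odd (i div 4)"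
    have trip: "c {Inl (Suc x), Inr (Suc ` {x,y,z})} = p0 \<and> c {Inl (Suc y), Inr (Suc ` {x,y,z})} = p1
       \<and> c {Inl (Suc z), Inr (Suc ` {x,y,z})} = p2"
      if "x \<in> H" "y \<in> H" "z \<in> H" "x < y" "y < z" for x y z
    proof -
      have "{x,y,z} \<in> nsets H 3" using that by (auto simp: nsets_def card_insert_if)
      then have fi: "f {x,y,z} = i" using fH by auto
      have s: "sorted_list_of_set {x,y,z} = [x,y,z]" using that by simp
      have "pat {x,y,z} 0 = c {Inl (Suc x), Inr (Suc ` {x,y,z})}"
           "pat {x,y,z} 1 = c {Inl (Suc y), Inr (Suc ` {x,y,z})}"
           "pat {x,y,z} 2 = c {Inl (Suc z), Inr (Suc ` {x,y,z})}"
        unfolding pat_def s by simp_all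
      then show ?thesis using fi unfolding f_def p0_def p1_def p2_def
        by (auto split: if_splits)
    qed
    have Hfin: "finite H" "card H = 9" "H \<subseteq> {..<N}" using H by (auto simp: nsets_def finite_subset)
    define s where "s = sorted_list_of_set H"
    define h where "h = (\<lambda>j. s ! j)"
    have slen: "length s = 9" using Hfin s_def by simp
    have hmono: "h u < h v" if "u < v" "v < 9" for u v
      unfolding h_def s_def using that slen[unfolded s_def]
      by (simp add: sorted_wrt_nth_less)
    have hin: "h u \<in> H" if "u < 9" for u
      unfolding h_def s_def using that slen[unfolded s_def] Hfin(1) by (metis nth_mem set_sorted_list_of_set)
    have hN: "h u < N" if "u < 9" for u using hin[OF that] Hfin by auto
    have hinj: "u = v" if "u < 9" "v < 9" "h u = h v" for u v
      using hmono that by (metis less_irrefl linorder_neqE_nat)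
    have N9: "9 \<le> N" using Hfin card_mono[of "{..<N}" H] by auto
    define a where "a l = Suc (h (2*l - 1))" for l
    have inj: "inj_on a {1..4}"
    proof (rule inj_onI)
      fix x y assume "x \<in> {1..4::nat}" "y \<in> {1..4::nat}" "a x = a y"
      then have "2*x - 1 = 2*y - 1" using hinj[of "2*x-1" "2*y-1"] by (auto simp: a_def)
      then show "x = y" using \<open>x \<in> {1..4}\<close> \<open>y \<in> {1..4}\<close> by auto
    qed
    have arng: "a l \<in> {1..N}" if "l \<in> {1..4}" for l using hN that by (auto simp: a_def Suc_le_eq)
    have aimg: "Suc (h w) \<in> a ` {1..4} \<Longrightarrow> even w \<Longrightarrow> w < 9 \<Longrightarrow> False" for w
    proof -
      assume "Suc (h w) \<in> a ` {1..4}" "even w" "w < 9"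
      then obtain l where "l \<in> {1..4::nat}" "h w = h (2*l - 1)" by (auto simp: a_def)
      then have "w = 2*l - 1" using hinj[of w "2*l-1"] \<open>w < 9\<close> by auto
      then show False using \<open>even w\<close> \<open>l \<in> {1..4}\<close> by auto
    qed
    have inter: "Suc ` {h (2*l - 1), h (2*m - 1), h w} \<inter> a ` {1..4} = {a l, a m}"
      if "l \<in> {1..4}" "m \<in> {1..4}" "even w" "w < 9" for l m w
    proof -
      have "Suc (h w) \<notin> a ` {1..4}" using aimg that(3,4) by blast
      moreover have "a l \<in> a ` {1..4}" "a m \<in> a ` {1..4}" using that(1,2) by auto
      ultimately show ?thesis unfolding a_def by auto
    qed
    have card3: "card (Suc ` {x,y,z}) = 3" if "x < y" "y < z" for x y z :: nat
      using that by (simp add: card_insert_if)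
    have sub: "Suc ` {h u, h v, h w} \<subseteq> {1..N}" if "u < 9" "v < 9" "w < 9" for u v w
      using hN that by (auto simp: Suc_le_eq)
    consider "p0 = p1" | "p1 = p2" | "p0 = p2" by blast
    then show ?thesis
    proof cases
      case 1
      define X where "X l m = Suc ` {h (2*l - 1), h (2*m - 1), h 8}" for l m
      show ?thesis
      proof (rule key[OF inj arng, where X=X and k=3 and c=c and col=p0])
        fix l m :: nat assume lm: "1 \<le> l" "l < m" "m \<le> 4"
        have o: "h (2*l-1) < h (2*m-1)" "h (2*m-1) < h 8" using lm by (auto intro!: hmono)
        have t: "c {Inl (a l), Inr (X l m)} = p0 \<and> c {Inl (a m), Inr (X l m)} = p1"
          using trip[OF hin hin hin o] lm unfolding X_def a_def by simp
        show "X l m \<subseteq> {1..N} \<and> card (X l m) = 3 \<and> X l m \<inter> a ` {1..4} = {a l, a m}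
          \<and> c {Inl (a l), Inr (X l m)} = p0 \<and> c {Inl (a m), Inr (X l m)} = p0"
        proof (intro conjI)
          have i9: "2*l-1 < 9" "2*m-1 < 9" "8 < (9::nat)" "l \<in> {1..4}" "m \<in> {1..4}" "even (8::nat)" using lm by auto
          show "X l m \<subseteq> {1..N}" using sub[OF i9(1,2,3)] unfolding X_def by simp
          show "card (X l m) = 3" using card3[OF o] unfolding X_def .
          show "X l m \<inter> a ` {1..4} = {a l, a m}" using inter[OF i9(4,5,6,3)] unfolding X_def by simp
          show "c {Inl (a l), Inr (X l m)} = p0" using t 1 by simp
          show "c {Inl (a m), Inr (X l m)} = p0" using t 1 by simp
        qed
      qed
    next
      case 2
      define X where "X l m = Suc ` {h (2*l - 1), h (2*m - 1), h 0}" for l m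
      show ?thesis
      proof (rule key[OF inj arng, where X=X and k=3 and c=c and col=p1])
        fix l m :: nat assume lm: "1 \<le> l" "l < m" "m \<le> 4"
        have o: "h 0 < h (2*l-1)" "h (2*l-1) < h (2*m-1)" using lm by (auto intro!: hmono)
        have eq: "X l m = Suc ` {h 0, h (2*l - 1), h (2*m - 1)}" unfolding X_def by auto
        have t: "c {Inl (a l), Inr (X l m)} = p1 \<and> c {Inl (a m), Inr (X l m)} = p2"
          using trip[OF hin hin hin o] lm unfolding eq a_def by simp
        show "X l m \<subseteq> {1..N} \<and> card (X l m) = 3 \<and> X l m \<inter> a ` {1..4} = {a l, a m}
          \<and> c {Inl (a l), Inr (X l m)} = p1 \<and> c {Inl (a m), Inr (X l m)} = p1"
        proof (intro conjI)
          have i9: "2*l-1 < 9" "2*m-1 < 9" "0 < (9::nat)" "l \<in> {1..4}" "m \<in> {1..4}" "even (0::nat)" using lm by auto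
          show "X l m \<subseteq> {1..N}" using sub[OF i9(1,2,3)] unfolding X_def by simp
          show "card (X l m) = 3" using card3[OF o] unfolding eq .
          show "X l m \<inter> a ` {1..4} = {a l, a m}" using inter[OF i9(4,5,6,3)] unfolding X_def by simp
          show "c {Inl (a l), Inr (X l m)} = p1" using t 2 by simp
          show "c {Inl (a m), Inr (X l m)} = p1" using t 2 by simp
        qed
      qed
    next
      case 3
      define X where "X l m = Suc ` {h (2*l - 1), h (2*m - 1), h (2*l)}" for l m
      show ?thesis
      proof (rule key[OF inj arng, where X=X and k=3 and c=c and col=p0])
        fix l m :: nat assume lm: "1 \<le> l" "l < m" "m \<le> 4"
        have o: "h (2*l-1) < h (2*l)" "h (2*l) < h (2*m-1)" using lm by (auto intro!: hmono)
        have eq: "X l m = Suc ` {h (2*l - 1), h (2*l), h (2*m - 1)}" unfolding X_def by auto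
        have t: "c {Inl (a l), Inr (X l m)} = p0 \<and> c {Inl (a m), Inr (X l m)} = p2"
          using trip[OF hin hin hin o] lm unfolding eq a_def by simp
        show "X l m \<subseteq> {1..N} \<and> card (X l m) = 3 \<and> X l m \<inter> a ` {1..4} = {a l, a m}
          \<and> c {Inl (a l), Inr (X l m)} = p0 \<and> c {Inl (a m), Inr (X l m)} = p0"
        proof (intro conjI)
          have i9: "2*l-1 < 9" "2*m-1 < 9" "2*l < (9::nat)" "l \<in> {1..4}" "m \<in> {1..4}" "even (2*l::nat)" using lm by auto
          show "X l m \<subseteq> {1..N}" using sub[OF i9(1,2,3)] unfolding X_def by simp
          show "card (X l m) = 3" using card3[OF o] unfolding eq .
          show "X l m \<inter> a ` {1..4} = {a l, a m}" using inter[OF i9(4,5,6,3)] unfolding X_def by simp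
          show "c {Inl (a l), Inr (X l m)} = p0" using t 3 by simp
          show "c {Inl (a m), Inr (X l m)} = p0" using t 3 by simp
        qed
      qed
    qed
  qed
  moreover have "3 \<le> N"
  proof -
    have "partn_lst {..<N} (replicate 8 9) 3" by (rule N)
    have f0: "(\<lambda>_. 0::nat) \<in> nsets {..<N} 3 \<rightarrow> {..<8}" by auto
    obtain i H where "i < length (replicate 8 (9::nat))" "H \<in> nsets {..<N} (replicate 8 9 ! i)"
      using partn_lstE[OF N f0] by (metis length_replicate)
    then have "card H = 9" "H \<subseteq> {..<N}" "finite H" by (auto simp: nsets_def finite_subset)
    then show ?thesis using card_mono[of "{..<N}" H] by auto
  qed
  ultimately show ?thesis by blast
qed

end
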